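(* Let $f$ be a ternary form of degree $d$ over $\mathbb{C}$. Then $f$ lies in the closure (in the space of ternary forms of degree $d$) of the set of forms which can be written as $\alpha(x,y)+\beta(z)$ in some linear coordinates $(x,y,z)$ if and only if $f$ can be written either as $\alpha(x,y)+\beta(z)$ or as $\alpha(x,y)+\beta(x)z$ in some linear coordinates (with $\alpha,\beta$ forms).
   Context: "Written in some linear coordinates" means after a change of variables by an element of $GL(3,\mathbb{C})$. *)

theory Defs
  imports "HOL-Analysis.Analysis"
begin

text \<open>A ternary form of degree d over C is represented by its coefficient function on
exponent triples (i,j,k), supported on the monomials with i+j+k = d.  The ambient
space of such coefficient functions carries the product topology, which on the
(closed, finite-dimensional) subspace of forms of degree d is the Euclidean topology.\<close>

definition tmonos :: "nat \<Rightarrow> (nat \<times> nat \<times> nat) set" where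
  "tmonos d = {(i,j,k). i + j + k = d}"

definition is_form :: "nat \<Rightarrow> (nat \<times> nat \<times> nat \<Rightarrow> complex) \<Rightarrow> bool" where
  "is_form d c \<longleftrightarrow> (\<forall>m. m \<notin> tmonos d \<longrightarrow> c m = 0)"

definition form_eval :: "nat \<Rightarrow> (nat \<times> nat \<times> nat \<Rightarrow> complex) \<Rightarrow> complex^3 \<Rightarrow> complex" where
  "form_eval d c v = (\<Sum>m\<in>tmonos d. c m * (v$1) ^ fst m * (v$2) ^ fst (snd m) * (v$3) ^ snd (snd m))"

definition binform :: "nat \<Rightarrow> (nat \<Rightarrow> complex) \<Rightarrow> complex^3 \<Rightarrow> complex" where
  "binform d a v = (\<Sum>i\<le>d. a i * (v$1) ^ i * (v$2) ^ (d - i))"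

definition split_form :: "nat \<Rightarrow> (nat \<times> nat \<times> nat \<Rightarrow> complex) \<Rightarrow> bool" where
  "split_form d c \<longleftrightarrow> (\<exists>A :: complex^3^3. invertible A \<and>
      (\<exists>a b. \<forall>v. form_eval d c (A *v v) = binform d a v + b * (v$3) ^ d))"

definition degen_form :: "nat \<Rightarrow> (nat \<times> nat \<times> nat \<Rightarrow> complex) \<Rightarrow> bool" where
  "degen_form d c \<longleftrightarrow> (\<exists>A :: complex^3^3. invertible A \<and>
      (\<exists>a b. (d = 0 \<longrightarrow> b = 0) \<and>
         (\<forall>v. form_eval d c (A *v v) = binform d a v + b * (v$1) ^ (d - 1) * v$3)))"

end

theory Submission
  imports Defs
begin


definition hf :: "nat \<Rightarrow> (complex^3 \<Rightarrow> complex) \<Rightarrow> bool" where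
  "hf d F \<longleftrightarrow> (\<exists>c. F = form_eval d c)"

lemma tmonos_sub: "tmonos d \<subseteq> {..d} \<times> {..d} \<times> {..d}"
  by (auto simp: tmonos_def)

lemma finite_tmonos[simp]: "finite (tmonos d)"
  by (rule finite_subset[OF tmonos_sub]) auto

lemma form_eval_add: "form_eval d (\<lambda>m. c m + e m) v = form_eval d c v + form_eval d e v"
  by (simp add: form_eval_def sum.distrib distrib_right)

lemma form_eval_smult: "form_eval d (\<lambda>m. k * c m) v = k * form_eval d c v"
  by (simp add: form_eval_def sum_distrib_left mult.assoc)

lemma form_eval_sum: "finite K \<Longrightarrow> form_eval d (\<lambda>m. \<Sum>k\<in>K. e k m) v = (\<Sum>k\<in>K. form_eval d (e k) v)"
  unfolding form_eval_def by (simp add: mult.assoc sum_distrib_right) (rule sum.swap)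

lemma hf_add: "hf d F \<Longrightarrow> hf d G \<Longrightarrow> hf d (\<lambda>v. F v + G v)"
proof -
  assume "hf d F" "hf d G"
  then obtain c e where "F = form_eval d c" "G = form_eval d e" by (auto simp: hf_def)
  then show ?thesis unfolding hf_def
    by (intro exI[of _ "\<lambda>m. c m + e m"]) (simp add: form_eval_add fun_eq_iff)
qed

lemma hf_smult: "hf d F \<Longrightarrow> hf d (\<lambda>v. k * F v)"
proof -
  assume "hf d F"
  then obtain c where "F = form_eval d c" by (auto simp: hf_def)
  then show ?thesis unfolding hf_def
    by (intro exI[of _ "\<lambda>m. k * c m"]) (simp add: form_eval_smult fun_eq_iff)
qed

lemma hf_zero: "hf d (\<lambda>v. 0)"
  unfolding hf_def by (rule exI[of _ "\<lambda>_. 0"]) (simp add: form_eval_def fun_eq_iff)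

lemma hf_sum: "finite K \<Longrightarrow> (\<And>k. k \<in> K \<Longrightarrow> hf d (F k)) \<Longrightarrow> hf d (\<lambda>v. \<Sum>k\<in>K. F k v)"
  by (induction K rule: finite_induct) (auto intro: hf_add hf_zero)

lemma hf_diff: "hf d F \<Longrightarrow> hf d G \<Longrightarrow> hf d (\<lambda>v. F v - G v)"
  using hf_add[of d F "\<lambda>v. (-1) * G v"] hf_smult[of d G "-1"] by simp

lemma tmonos_0: "tmonos 0 = {(0,0,0)}"
  by (auto simp: tmonos_def)

lemma hf_const: "hf 0 (\<lambda>v. k)"
  unfolding hf_def by (rule exI[of _ "\<lambda>_. k"]) (simp add: form_eval_def tmonos_0 fun_eq_iff)

lemma hf_shift:
  assumes "hf d F"
  shows "hf (d + (a + b + e)) (\<lambda>v. (v$1)^a * (v$2)^b * (v$3)^e * F v)"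
proof -
  obtain c where c: "F = form_eval d c" using assms by (auto simp: hf_def)
  define c' where "c' = (\<lambda>m. if a \<le> fst m \<and> b \<le> fst (snd m) \<and> e \<le> snd (snd m) then c (fst m - a, fst (snd m) - b, snd (snd m) - e) else 0)"
  define sh where "sh = (\<lambda>m. (fst m + a, fst (snd m) + b, snd (snd m) + e))"
  have inj: "inj_on sh (tmonos d)" by (auto simp: sh_def inj_on_def prod_eq_iff)
  have img: "sh ` tmonos d \<subseteq> tmonos (d + (a+b+e))" by (auto simp: sh_def tmonos_def)
  have "form_eval (d + (a+b+e)) c' v = (\<Sum>m\<in>sh ` tmonos d. c' m * (v$1) ^ fst m * (v$2) ^ fst (snd m) * (v$3) ^ snd (snd m))" for v
    unfolding form_eval_def
  proof (rule sum.mono_neutral_right[OF finite_tmonos img])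
    show "\<forall>m\<in>tmonos (d + (a + b + e)) - sh ` tmonos d. c' m * v $ 1 ^ fst m * v $ 2 ^ fst (snd m) * v $ 3 ^ snd (snd m) = 0"
    proof
      fix m assume m: "m \<in> tmonos (d + (a + b + e)) - sh ` tmonos d"
      have "\<not> (a \<le> fst m \<and> b \<le> fst (snd m) \<and> e \<le> snd (snd m))"
      proof
        assume h: "a \<le> fst m \<and> b \<le> fst (snd m) \<and> e \<le> snd (snd m)"
        hence "(fst m - a, fst (snd m) - b, snd (snd m) - e) \<in> tmonos d" using m by (auto simp: tmonos_def)
        moreover have "sh (fst m - a, fst (snd m) - b, snd (snd m) - e) = m" using h by (auto simp: sh_def prod_eq_iff)
        ultimately have "m \<in> sh ` tmonos d" by (metis image_eqI)
        thus False using m by simp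
      qed
      hence "c' m = 0" unfolding c'_def by (rule if_not_P)
      thus "c' m * v $ 1 ^ fst m * v $ 2 ^ fst (snd m) * v $ 3 ^ snd (snd m) = 0"
        by simp
    qed
  qed
  also have "\<dots> v = (\<Sum>m\<in>tmonos d. c' (sh m) * (v$1) ^ fst (sh m) * (v$2) ^ fst (snd (sh m)) * (v$3) ^ snd (snd (sh m)))" for v
    by (simp only: sum.reindex[OF inj] o_def)
  also have "\<dots> v = (v$1)^a * (v$2)^b * (v$3)^e * F v" for v
    unfolding c form_eval_def sum_distrib_left
  proof (rule sum.cong[OF refl])
    fix m
    have "c' (sh m) = c m" by (simp add: c'_def sh_def)
    moreover have "sh m = (fst m + a, fst (snd m) + b, snd (snd m) + e)" by (simp add: sh_def)
    ultimately show "c' (sh m) * (v$1) ^ fst (sh m) * (v$2) ^ fst (snd (sh m)) * (v$3) ^ snd (snd (sh m))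
       = (v$1)^a * (v$2)^b * (v$3)^e * (c m * (v$1) ^ fst m * (v$2) ^ fst (snd m) * (v$3) ^ snd (snd m))"
      by (simp add: power_add)
  qed
  finally have "\<And>v. form_eval (d + (a+b+e)) c' v = (v$1)^a * (v$2)^b * (v$3)^e * F v" .
  then show ?thesis unfolding hf_def by (intro exI[of _ c']) (simp add: fun_eq_iff)
qed

lemma hf_mono: "m \<in> tmonos a \<Longrightarrow> hf b G \<Longrightarrow>
   hf (a + b) (\<lambda>v. (v$1) ^ fst m * (v$2) ^ fst (snd m) * (v$3) ^ snd (snd m) * G v)"
  using hf_shift[of b G "fst m" "fst (snd m)" "snd (snd m)"]
  by (auto simp: tmonos_def add.commute)

lemma hf_mult:
  assumes "hf a F" "hf b G"
  shows "hf (a + b) (\<lambda>v. F v * G v)"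
proof -
  obtain c where c: "F = form_eval a c" using assms by (auto simp: hf_def)
  have eq: "(\<lambda>v. F v * G v) = (\<lambda>v. \<Sum>m\<in>tmonos a. c m * ((v$1) ^ fst m * (v$2) ^ fst (snd m) * (v$3) ^ snd (snd m) * G v))"
    by (auto simp: c form_eval_def sum_distrib_right mult.assoc)
  have "hf (a+b) (\<lambda>v. \<Sum>m\<in>tmonos a. c m * ((v$1) ^ fst m * (v$2) ^ fst (snd m) * (v$3) ^ snd (snd m) * G v))"
    by (rule hf_sum) (auto intro!: hf_smult hf_mono assms(2))
  then show ?thesis by (subst eq)
qed

lemma hf_var: "hf 1 (\<lambda>v. v$i)"
proof -
  have h1: "hf 1 (\<lambda>v. v$1)" using hf_shift[OF hf_const[of 1], of 1 0 0] by simp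
  have h2: "hf 1 (\<lambda>v. v$2)" using hf_shift[OF hf_const[of 1], of 0 1 0] by simp
  have h3: "hf 1 (\<lambda>v. v$3)" using hf_shift[OF hf_const[of 1], of 0 0 1] by simp
  show ?thesis using exhaust_3[of i] h1 h2 h3 by auto
qed

definition lin :: "complex^3 \<Rightarrow> complex^3 \<Rightarrow> complex" where
  "lin l w = (\<Sum>i\<in>UNIV. l$i * w$i)"

lemma hf_lin: "hf 1 (lin l)"
  unfolding lin_def
proof (rule hf_sum)
  show "hf 1 (\<lambda>v. l$i * v$i)" for i by (rule hf_smult[OF hf_var])
qed simp

lemma hf_pow: "hf d F \<Longrightarrow> hf (d*n) (\<lambda>v. F v ^ n)"
proof (induction n)
  case 0 then show ?case using hf_const[of 1] by simp
next
  case (Suc n)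
  then show ?case using hf_mult[OF Suc.prems Suc.IH] by (simp add: algebra_simps)
qed

lemma hf_lin_pow: "hf n (\<lambda>v. lin l v ^ n)"
  using hf_pow[OF hf_lin, of n l] by simp

lemma hf_cong: "hf d F \<Longrightarrow> d = e \<Longrightarrow> hf e F" by simp

lemma lin_matrix: "(A *v v) $ r = lin (A $ r) v"
  by (simp add: matrix_vector_mult_def lin_def)

lemma hf_compose:
  assumes "hf d F"
  shows "hf d (\<lambda>v. F (A *v v))"
proof -
  obtain c where c: "F = form_eval d c" using assms by (auto simp: hf_def)
  have eq: "(\<lambda>v. F (A *v v)) = (\<lambda>v. \<Sum>m\<in>tmonos d. c m * ((lin (A$1) v) ^ fst m * (lin (A$2) v) ^ fst (snd m) * (lin (A$3) v) ^ snd (snd m)))"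
    by (auto simp: c form_eval_def lin_matrix mult.assoc)
  have "hf d (\<lambda>v. \<Sum>m\<in>tmonos d. c m * ((lin (A$1) v) ^ fst m * (lin (A$2) v) ^ fst (snd m) * (lin (A$3) v) ^ snd (snd m)))"
  proof (rule hf_sum)
    fix m assume "m \<in> tmonos d"
    hence e: "fst m + fst (snd m) + snd (snd m) = d" by (auto simp: tmonos_def)
    show "hf d (\<lambda>v. c m * ((lin (A$1) v) ^ fst m * (lin (A$2) v) ^ fst (snd m) * (lin (A$3) v) ^ snd (snd m)))"
      by (rule hf_smult, rule hf_cong[OF hf_mult[OF hf_mult[OF hf_lin_pow hf_lin_pow] hf_lin_pow] e])
  qed simp
  then show ?thesis by (subst eq)
qed

definition z3 :: "complex^3 \<Rightarrow> complex^3" where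
  "z3 v = vector [v$1, v$2, 0]"

lemma z3_nth[simp]: "z3 v $ 1 = v$1" "z3 v $ 2 = v$2" "z3 v $ 3 = 0"
  by (simp_all add: z3_def)

lemma hf_binform:
  assumes "hf d F"
  shows "\<exists>a. \<forall>v. F (z3 v) = binform d a v"
proof -
  obtain c where c: "F = form_eval d c" using assms by (auto simp: hf_def)
  define sh where "sh = (\<lambda>i::nat. (i, d - i, 0::nat))"
  have inj: "inj_on sh {..d}" by (auto simp: sh_def inj_on_def)
  have img: "sh ` {..d} \<subseteq> tmonos d" by (auto simp: sh_def tmonos_def)
  have "F (z3 v) = (\<Sum>m\<in>sh ` {..d}. c m * (z3 v$1) ^ fst m * (z3 v$2) ^ fst (snd m) * (z3 v$3) ^ snd (snd m))" for v
    unfolding c form_eval_def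
  proof (rule sum.mono_neutral_right[OF finite_tmonos img])
    show "\<forall>m\<in>tmonos d - sh ` {..d}. c m * z3 v $ 1 ^ fst m * z3 v $ 2 ^ fst (snd m) * z3 v $ 3 ^ snd (snd m) = 0"
    proof
      fix m assume m: "m \<in> tmonos d - sh ` {..d}"
      obtain i j k where m': "m = (i,j,k)" by (cases m) auto
      have "k \<noteq> 0"
      proof
        assume "k = 0"
        hence "m = sh i" "i \<in> {..d}" using m m' by (auto simp: sh_def tmonos_def)
        thus False using m by blast
      qed
      thus "c m * z3 v $ 1 ^ fst m * z3 v $ 2 ^ fst (snd m) * z3 v $ 3 ^ snd (snd m) = 0"
        by (simp add: m')
    qed
  qed
  also have "\<dots> v = binform d (\<lambda>i. c (i, d-i, 0)) v" for v
    by (simp only: sum.reindex[OF inj] o_def) (simp add: binform_def sh_def)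
  finally show ?thesis by blast
qed



definition e3 :: "complex^3" where "e3 = vector [0,0,1]"

definition mat3 :: "complex \<Rightarrow> complex \<Rightarrow> complex \<Rightarrow> complex \<Rightarrow> complex \<Rightarrow> complex \<Rightarrow> complex \<Rightarrow> complex \<Rightarrow> complex \<Rightarrow> complex^3^3" where
  "mat3 a b c d e f g h i = vector [vector [a,b,c], vector [d,e,f], vector [g,h,i]]"

lemma vec3_eq: "(x::complex^3) = y \<longleftrightarrow> x$1 = y$1 \<and> x$2 = y$2 \<and> x$3 = y$3"
  by (simp add: vec_eq_iff forall_3)

lemma e3_nth[simp]: "e3$1 = 0" "e3$2 = 0" "e3$3 = 1"
  by (simp_all add: e3_def)

lemma mat3_mult_nth[simp]:
  "(mat3 a b c d e f g h i *v v)$1 = a * v$1 + b * v$2 + c * v$3"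
  "(mat3 a b c d e f g h i *v v)$2 = d * v$1 + e * v$2 + f * v$3"
  "(mat3 a b c d e f g h i *v v)$3 = g * v$1 + h * v$2 + i * v$3"
  by (simp_all add: mat3_def matrix_vector_mult_def sum_3)

lemma mv_nth: "(A *v v)$k = A$k$1 * v$1 + A$k$2 * v$2 + A$k$3 * v$3" for A :: "complex^3^3"
  by (simp add: matrix_vector_mult_def sum_3)

lemma lin3: "lin l w = l$1 * w$1 + l$2 * w$2 + l$3 * w$3"
  by (simp add: lin_def sum_3)

lemma lin_add: "lin l (v + w) = lin l v + lin l w"
  by (simp add: lin3 algebra_simps)

lemma lin_smult: "lin l (s *s w) = s * lin l w"
  by (simp add: lin3 algebra_simps)

lemma mv_add_smult: "A *v (v + s *s w) = A *v v + s *s (A *v w)" for A :: "complex^3^3"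
  by (simp add: vec3_eq mv_nth algebra_simps)

lemma lin_mv: "lin l (A *v v) = lin (l v* A) v" for A :: "complex^3^3"
  by (simp add: lin3 mv_nth vector_matrix_mult_def sum_3 algebra_simps)

lemma invertible_from_inverse:
  fixes A B :: "complex^3^3"
  assumes "\<And>v. A *v (B *v v) = v"
  shows "invertible A"
proof -
  have "A ** B = mat 1" unfolding matrix_eq
    using assms by (simp add: matrix_vector_mul_assoc[symmetric])
  thus ?thesis using invertible_right_inverse by blast
qed

lemma z3_decomp: "v = z3 v + v$3 *s e3"
  by (simp add: vec3_eq z3_def)

lemma basis_e3:
  assumes "u \<noteq> 0"
  shows "\<exists>A::complex^3^3. invertible A \<and> A *v e3 = u"
proof -
  consider "u$3 \<noteq> 0" | "u$3 = 0" "u$2 \<noteq> 0" | "u$3 = 0" "u$2 = 0" "u$1 \<noteq> 0"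
    using assms by (auto simp: vec3_eq)
  then show ?thesis
  proof cases
    case 1
    let ?A = "mat3 1 0 (u$1) 0 1 (u$2) 0 0 (u$3)"
    let ?B = "mat3 1 0 (-u$1/u$3) 0 1 (-u$2/u$3) 0 0 (1/u$3)"
    have "invertible ?A" by (rule invertible_from_inverse[of _ ?B]) (use 1 in \<open>simp add: vec3_eq field_simps\<close>)
    moreover have "?A *v e3 = u" by (simp add: vec3_eq)
    ultimately show ?thesis by blast
  next
    case 2
    let ?A = "mat3 1 0 (u$1) 0 0 (u$2) 0 1 0"
    let ?B = "mat3 1 (-u$1/u$2) 0 0 0 1 0 (1/u$2) 0"
    have "invertible ?A" by (rule invertible_from_inverse[of _ ?B]) (use 2 in \<open>simp add: vec3_eq field_simps\<close>)
    moreover have "?A *v e3 = u" using 2 by (simp add: vec3_eq)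
    ultimately show ?thesis by blast
  next
    case 3
    let ?A = "mat3 0 0 (u$1) 1 0 0 0 1 0"
    let ?B = "mat3 0 1 0 0 0 1 (1/u$1) 0 0"
    have "invertible ?A" by (rule invertible_from_inverse[of _ ?B]) (use 3 in \<open>simp add: vec3_eq field_simps\<close>)
    moreover have "?A *v e3 = u" using 3 by (simp add: vec3_eq)
    ultimately show ?thesis by blast
  qed
qed

lemma hf_z3_binform:
  assumes "hf d G" "\<And>v s. G (v + s *s e3) = G v"
  shows "\<exists>a. \<forall>v. G v = binform d a v"
proof -
  obtain a where a: "\<And>v. G (z3 v) = binform d a v" using hf_binform[OF assms(1)] by blast
  have "G v = binform d a v" for v
    using assms(2)[of "z3 v" "v$3"] a[of v] z3_decomp[of v] by simp
  thus ?thesis by blast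
qed

lemma split_e3:
  assumes "hf d \<alpha>" "\<And>v s. \<alpha> (v + s *s e3) = \<alpha> v"
  shows "\<exists>A::complex^3^3. invertible A \<and> (\<exists>a b'. \<forall>v. \<alpha> (A *v v) + b * lin l (A *v v) ^ d = binform d a v + b' * (v$3)^d)"
proof (cases "l$3 = 0")
  case True
  let ?G = "\<lambda>v. \<alpha> v + b * lin l v ^ d"
  have "hf d ?G" by (intro hf_add hf_smult assms(1) hf_lin_pow)
  moreover have "?G (v + s *s e3) = ?G v" for v s
    using assms(2) True by (simp add: lin_add lin_smult lin3)
  ultimately obtain a where "\<And>v. ?G v = binform d a v" using hf_z3_binform by blast
  hence "\<forall>v. ?G (mat 1 *v v) = binform d a v + 0 * (v$3)^d" by simp
  moreover have "invertible (mat 1 :: complex^3^3)" by (rule invertible_from_inverse[of _ "mat 1"]) simp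
  ultimately show ?thesis by blast
next
  case False
  let ?A = "mat3 1 0 0 0 1 0 (-l$1/l$3) (-l$2/l$3) (1/l$3)"
  let ?B = "mat3 1 0 0 0 1 0 (l$1) (l$2) (l$3)"
  have inv: "invertible ?A" by (rule invertible_from_inverse[of _ ?B]) (use False in \<open>simp add: vec3_eq field_simps\<close>)
  obtain a where a: "\<And>v. \<alpha> v = binform d a v" using hf_z3_binform[OF assms] by blast
  have "\<alpha> (?A *v v) + b * lin l (?A *v v) ^ d = binform d a v + b * (v$3)^d" for v
  proof -
    have "lin l (?A *v v) = v$3" using False by (simp add: lin3 field_simps)
    moreover have "binform d a (?A *v v) = binform d a v" by (simp add: binform_def)
    ultimately show ?thesis by (simp add: a)
  qed
  thus ?thesis using inv by blast
qed



lemma split_general: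
  assumes "hf d \<alpha>" "u \<noteq> 0" "\<And>w s. \<alpha> (w + s *s u) = \<alpha> w"
  shows "\<exists>A::complex^3^3. invertible A \<and> (\<exists>a b'. \<forall>v. \<alpha> (A *v v) + b * lin l (A *v v) ^ d = binform d a v + b' * (v$3)^d)"
proof -
  obtain A0 :: "complex^3^3" where A0: "invertible A0" "A0 *v e3 = u" using basis_e3[OF assms(2)] by blast
  have h1: "hf d (\<lambda>v. \<alpha> (A0 *v v))" by (rule hf_compose[OF assms(1)])
  have h2: "\<alpha> (A0 *v (v + s *s e3)) = \<alpha> (A0 *v v)" for v s
    by (simp add: mv_add_smult A0(2) assms(3))
  obtain A1 a b' where A1: "invertible A1"
    "\<And>v. \<alpha> (A0 *v (A1 *v v)) + b * lin (l v* A0) (A1 *v v) ^ d = binform d a v + b' * (v$3)^d"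
    using split_e3[OF h1 h2, of b "l v* A0"] by blast
  have "\<alpha> ((A0 ** A1) *v v) + b * lin l ((A0 ** A1) *v v) ^ d = binform d a v + b' * (v$3)^d" for v
    using A1(2)[of v] by (simp add: matrix_vector_mul_assoc[symmetric] lin_mv)
  moreover have "invertible (A0 ** A1)" by (rule invertible_mult[OF A0(1) A1(1)])
  ultimately show ?thesis by blast
qed

lemma degen_sub:
  assumes "hf d F" "invertible A" "A *v e3 = e3"
    "\<And>v s. F (v + s *s e3) = F v + s * \<mu> * lin l v ^ (d-1)"
    "\<And>v. lin l (A *v z3 v) ^ (d-1) = \<kappa> * (v$1)^(d-1)"
  shows "\<exists>A::complex^3^3. invertible A \<and> (\<exists>a b. \<forall>v. F (A *v v) = binform d a v + b * (v$1)^(d-1) * v$3)"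
proof -
  obtain a where a: "\<And>v. F (A *v z3 v) = binform d a v"
    using hf_binform[OF hf_compose[OF assms(1), of A]] by blast
  have "F (A *v v) = binform d a v + (\<mu> * \<kappa>) * (v$1)^(d-1) * v$3" for v
  proof -
    have "F (A *v v) = F (A *v (z3 v + v$3 *s e3))" using z3_decomp[of v] by simp
    also have "\<dots> = F (A *v z3 v + v$3 *s e3)" by (simp add: mv_add_smult assms(3))
    also have "\<dots> = F (A *v z3 v) + v$3 * \<mu> * lin l (A *v z3 v) ^ (d-1)" by (rule assms(4))
    also have "\<dots> = binform d a v + v$3 * \<mu> * (\<kappa> * (v$1)^(d-1))" by (simp only: a assms(5))
    finally show ?thesis by (simp add: algebra_simps)
  qed
  thus ?thesis using assms(2) by blast
qed

lemma degen_e3: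
  assumes "hf d F" "\<And>v s. F (v + s *s e3) = F v + s * \<mu> * lin l v ^ (d-1)" "l$3 = 0"
  shows "\<exists>A::complex^3^3. invertible A \<and> (\<exists>a b. \<forall>v. F (A *v v) = binform d a v + b * (v$1)^(d-1) * v$3)"
proof -
  consider "l$1 \<noteq> 0" | "l$1 = 0" "l$2 \<noteq> 0" | "l$1 = 0" "l$2 = 0" by blast
  then show ?thesis
  proof cases
    case 1
    let ?A = "mat3 (1/l$1) (-l$2/l$1) 0 0 1 0 0 0 1"
    let ?B = "mat3 (l$1) (l$2) 0 0 1 0 0 0 1"
    have "invertible ?A" by (rule invertible_from_inverse[of _ ?B]) (use 1 in \<open>simp add: vec3_eq field_simps\<close>)
    moreover have "?A *v e3 = e3" by (simp add: vec3_eq)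
    moreover have "lin l (?A *v z3 v) ^ (d-1) = 1 * (v$1)^(d-1)" for v
      using 1 assms(3) by (simp add: lin3 field_simps)
    ultimately show ?thesis using degen_sub[OF assms(1) _ _ assms(2)] by blast
  next
    case 2
    let ?A = "mat3 0 1 0 (1/l$2) 0 0 0 0 1"
    let ?B = "mat3 0 (l$2) 0 1 0 0 0 0 1"
    have "invertible ?A" by (rule invertible_from_inverse[of _ ?B]) (use 2 in \<open>simp add: vec3_eq field_simps\<close>)
    moreover have "?A *v e3 = e3" by (simp add: vec3_eq)
    moreover have "lin l (?A *v z3 v) ^ (d-1) = 1 * (v$1)^(d-1)" for v
      using 2 assms(3) by (simp add: lin3 field_simps)
    ultimately show ?thesis using degen_sub[OF assms(1) _ _ assms(2)] by blast
  next
    case 3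
    have "invertible (mat 1 :: complex^3^3)" by (rule invertible_from_inverse[of _ "mat 1"]) simp
    moreover have "(mat 1 :: complex^3^3) *v e3 = e3" by simp
    moreover have "lin l (mat 1 *v z3 v) ^ (d-1) = 0^(d-1) * (v$1)^(d-1)" for v
      using 3 assms(3) by (cases "d - 1") (simp_all add: lin3)
    ultimately show ?thesis using degen_sub[OF assms(1) _ _ assms(2)] by blast
  qed
qed

lemma degen_general:
  assumes "hf d F" "u \<noteq> 0" "lin l u = 0" "\<And>w s. F (w + s *s u) = F w + s * \<mu> * lin l w ^ (d-1)"
  shows "\<exists>A::complex^3^3. invertible A \<and> (\<exists>a b. \<forall>v. F (A *v v) = binform d a v + b * (v$1)^(d-1) * v$3)"
proof -
  obtain A0 :: "complex^3^3" where A0: "invertible A0" "A0 *v e3 = u" using basis_e3[OF assms(2)] by blast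
  have h1: "hf d (\<lambda>v. F (A0 *v v))" by (rule hf_compose[OF assms(1)])
  have h2: "F (A0 *v (v + s *s e3)) = F (A0 *v v) + s * \<mu> * lin (l v* A0) v ^ (d-1)" for v s
    by (simp add: mv_add_smult A0(2) assms(4) lin_mv)
  have h3: "(l v* A0)$3 = 0"
  proof -
    have "(l v* A0)$3 = lin (l v* A0) e3" by (simp add: lin3)
    also have "\<dots> = 0" using assms(3) A0(2) by (simp add: lin_mv[symmetric])
    finally show ?thesis .
  qed
  obtain A1 a b where A1: "invertible A1" "\<And>v. F (A0 *v (A1 *v v)) = binform d a v + b * (v$1)^(d-1) * v$3"
    using degen_e3[OF h1 h2 h3] by blast
  have "F ((A0 ** A1) *v v) = binform d a v + b * (v$1)^(d-1) * v$3" for v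
    using A1(2)[of v] by (simp add: matrix_vector_mul_assoc[symmetric])
  moreover have "invertible (A0 ** A1)" by (rule invertible_mult[OF A0(1) A1(1)])
  ultimately show ?thesis by blast
qed



lemma hf_is_form: "hf d F \<Longrightarrow> \<exists>c. is_form d c \<and> F = form_eval d c"
proof -
  assume "hf d F"
  then obtain c where c: "F = form_eval d c" by (auto simp: hf_def)
  let ?c = "\<lambda>m. if m \<in> tmonos d then c m else 0"
  have "is_form d ?c" by (simp add: is_form_def)
  moreover have "form_eval d ?c = form_eval d c"
    by (rule ext) (simp add: form_eval_def)
  ultimately show ?thesis using c by metis
qed

lemma binom_split:
  fixes X Y :: complex
  assumes "1 \<le> d"
  shows "(X + Y)^d = X^d + of_nat d * X^(d-1) * Y + (\<Sum>k\<in>{2..d}. of_nat (d choose k) * X^(d-k) * Y^k)"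
proof -
  have "(Y + X)^d = (\<Sum>k\<le>d. of_nat (d choose k) * Y^k * X^(d-k))" by (rule binomial_ring)
  also have "{..d} = {0,1} \<union> {2..d}" using assms by auto
  also have "(\<Sum>k\<in>{0,1} \<union> {2..d}. of_nat (d choose k) * Y^k * X^(d-k)) =
      (\<Sum>k\<in>{0,1}. of_nat (d choose k) * Y^k * X^(d-k)) + (\<Sum>k\<in>{2..d}. of_nat (d choose k) * Y^k * X^(d-k))"
    by (rule sum.union_disjoint) auto
  finally show ?thesis by (simp add: add.commute mult_ac)
qed

lemma key_identity:
  fixes X Z b \<epsilon> :: complex
  assumes "1 \<le> d" "\<epsilon> \<noteq> 0"
  shows "b * X^(d-1) * Z + (\<Sum>k\<in>{2..d}. \<epsilon>^(k-1) * (b / of_nat d * of_nat (d choose k) * X^(d-k) * Z^k))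
    = b / (of_nat d * \<epsilon>) * (X + \<epsilon> * Z)^d - b / (of_nat d * \<epsilon>) * X^d"
proof -
  have d0: "(of_nat d :: complex) \<noteq> 0" using assms by simp
  have "b / (of_nat d * \<epsilon>) * (X + \<epsilon> * Z)^d - b / (of_nat d * \<epsilon>) * X^d
     = b / (of_nat d * \<epsilon>) * (of_nat d * X^(d-1) * (\<epsilon> * Z)) + (\<Sum>k\<in>{2..d}. b / (of_nat d * \<epsilon>) * (of_nat (d choose k) * X^(d-k) * (\<epsilon> * Z)^k))"
    unfolding binom_split[OF assms(1)] by (simp add: algebra_simps sum_distrib_left)
  also have "b / (of_nat d * \<epsilon>) * (of_nat d * X^(d-1) * (\<epsilon> * Z)) = b * X^(d-1) * Z"
    using d0 assms(2) by (simp add: field_simps)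
  also have "(\<Sum>k\<in>{2..d}. b / (of_nat d * \<epsilon>) * (of_nat (d choose k) * X^(d-k) * (\<epsilon> * Z)^k))
     = (\<Sum>k\<in>{2..d}. \<epsilon>^(k-1) * (b / of_nat d * of_nat (d choose k) * X^(d-k) * Z^k))"
  proof (rule sum.cong[OF refl])
    fix k assume "k \<in> {2..d}"
    hence "\<epsilon>^k = \<epsilon> * \<epsilon>^(k-1)" by (cases k) auto
    thus "b / (of_nat d * \<epsilon>) * (of_nat (d choose k) * X^(d-k) * (\<epsilon> * Z)^k) = \<epsilon>^(k-1) * (b / of_nat d * of_nat (d choose k) * X^(d-k) * Z^k)"
      using d0 assms(2) by (simp add: power_mult_distrib field_simps)
  qed
  finally show ?thesis by simp
qed

lemma binform_minus:
  "binform d (\<lambda>i. a i - (if i = d then c else 0)) v = binform d a v - c * (v$1)^d"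
proof -
  have "binform d (\<lambda>i. a i - (if i = d then c else 0)) v =
     (\<Sum>i\<le>d. a i * (v$1)^i * (v$2)^(d-i) - (if i = d then c * (v$1)^d else 0))"
    unfolding binform_def by (rule sum.cong) (auto simp: algebra_simps)
  also have "\<dots> = binform d a v - (\<Sum>i\<le>d. (if i = d then c * (v$1)^d else 0))"
    unfolding binform_def by (rule sum_subtractf)
  also have "(\<Sum>i\<le>d. (if i = d then c * (v$1)^d else 0)) = c * (v$1)^d"
    by (subst sum.delta) auto
  finally show ?thesis .
qed

lemma split_d0: "split_form 0 f"
proof -
  have "invertible (mat 1 :: complex^3^3)" by (rule invertible_from_inverse[of _ "mat 1"]) simp
  moreover have "form_eval 0 f (mat 1 *v v) = binform 0 (\<lambda>_. f (0,0,0)) v + 0 * (v$3)^0" for v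
    by (simp add: form_eval_def tmonos_0 binform_def)
  ultimately show ?thesis unfolding split_form_def by blast
qed



lemma degen_in_closure:
  assumes "is_form d f" "degen_form d f"
  shows "f \<in> closure {g. is_form d g \<and> split_form d g}"
proof (cases "d = 0")
  case True
  have "split_form d f" unfolding True by (rule split_d0)
  then have "f \<in> {g. is_form d g \<and> split_form d g}" using assms(1) by blast
  then show ?thesis by (rule subsetD[OF closure_subset])
next
  case False
  hence d1: "1 \<le> d" by simp
  have d0: "(of_nat d :: complex) \<noteq> 0" using False by simp
  obtain A a b where A: "invertible A" and Aeq: "\<And>v. form_eval d f (A *v v) = binform d a v + b * (v$1)^(d-1) * v$3"
    using assms(2) unfolding degen_form_def by blast
  obtain B :: "complex^3^3" where BA: "B ** A = mat 1" using A unfolding invertible_def by blast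
  have BAv: "B *v (A *v y) = y" for y by (simp add: matrix_vector_mul_assoc BA)
  define q where "q = (\<lambda>k w. b / of_nat d * of_nat (d choose k) * lin (B$1) w ^ (d-k) * lin (B$3) w ^ k)"
  have hq: "hf d (q k)" if "k \<in> {2..d}" for k
  proof -
    have "hf (d - k + k) (\<lambda>w. lin (B$1) w ^ (d-k) * lin (B$3) w ^ k)"
      by (rule hf_mult[OF hf_lin_pow hf_lin_pow])
    hence "hf d (\<lambda>w. lin (B$1) w ^ (d-k) * lin (B$3) w ^ k)" using that by simp
    hence "hf d (\<lambda>w. (b / of_nat d * of_nat (d choose k)) * (lin (B$1) w ^ (d-k) * lin (B$3) w ^ k))"
      by (rule hf_smult)
    thus ?thesis unfolding q_def by (simp add: mult.assoc)
  qed
  have "\<forall>k\<in>{2..d}. \<exists>c. is_form d c \<and> q k = form_eval d c" using hq hf_is_form by blast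
  from bchoice[OF this] obtain e where e: "\<forall>k\<in>{2..d}. is_form d (e k) \<and> q k = form_eval d (e k)"
    by blast
  define \<phi> where "\<phi> = (\<lambda>(\<epsilon>::complex) m. f m + (\<Sum>k\<in>{2..d}. \<epsilon>^(k-1) * e k m))"
  have \<phi>form: "is_form d (\<phi> \<epsilon>)" for \<epsilon>
    using assms(1) e by (simp add: is_form_def \<phi>_def)
  have \<phi>eval: "form_eval d (\<phi> \<epsilon>) w = form_eval d f w + (\<Sum>k\<in>{2..d}. \<epsilon>^(k-1) * q k w)" for \<epsilon> w
  proof -
    have "form_eval d (\<phi> \<epsilon>) w = form_eval d f w + (\<Sum>k\<in>{2..d}. \<epsilon>^(k-1) * form_eval d (e k) w)"
      unfolding \<phi>_def by (simp only: form_eval_add form_eval_sum[OF finite_atLeastAtMost] form_eval_smult)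
    also have "\<dots> = form_eval d f w + (\<Sum>k\<in>{2..d}. \<epsilon>^(k-1) * q k w)"
      using e by (auto intro!: sum.cong)
    finally show ?thesis .
  qed
  have \<phi>split: "split_form d (\<phi> \<epsilon>)" if "\<epsilon> \<noteq> 0" for \<epsilon>
  proof -
    let ?C = "mat3 1 0 0 0 1 0 (-1/\<epsilon>) 0 (1/\<epsilon>)"
    have Cinv: "invertible ?C"
      by (rule invertible_from_inverse[of _ "mat3 1 0 0 0 1 0 1 0 \<epsilon>"]) (use that in \<open>simp add: vec3_eq field_simps\<close>)
    let ?a = "\<lambda>i. a i - (if i = d then b / (of_nat d * \<epsilon>) else 0)"
    have eqv: "form_eval d (\<phi> \<epsilon>) ((A ** ?C) *v v) = binform d ?a v + b / (of_nat d * \<epsilon>) * (v$3)^d" for v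
    proof -
      define y where "y = ?C *v v"
      have y1: "y$1 = v$1" and y2: "y$2 = v$2" and y3: "y$3 = (v$3 - v$1) / \<epsilon>"
        using that by (simp_all add: y_def field_simps)
      have x1: "lin (B$1) (A *v y) = v$1" using BAv[of y] y1 by (simp add: lin_matrix[symmetric])
      have x3: "lin (B$3) (A *v y) = y$3" using BAv[of y] by (simp add: lin_matrix[symmetric])
      have bfy: "binform d a y = binform d a v" by (simp add: binform_def y1 y2)
      have "form_eval d (\<phi> \<epsilon>) ((A ** ?C) *v v) = form_eval d (\<phi> \<epsilon>) (A *v y)"
        by (simp add: y_def matrix_vector_mul_assoc)
      also have "\<dots> = binform d a v + (b * (v$1)^(d-1) * y$3 + (\<Sum>k\<in>{2..d}. \<epsilon>^(k-1) * (b / of_nat d * of_nat (d choose k) * (v$1)^(d-k) * (y$3)^k)))"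
        by (simp only: \<phi>eval Aeq q_def x1 x3 bfy y1 add.assoc)
      also have "\<dots> = binform d a v + (b / (of_nat d * \<epsilon>) * (v$1 + \<epsilon> * y$3)^d - b / (of_nat d * \<epsilon>) * (v$1)^d)"
        by (simp only: key_identity[OF d1 that])
      also have "v$1 + \<epsilon> * y$3 = v$3" using that by (simp add: y3)
      finally show ?thesis by (simp add: binform_minus)
    qed
    have inv: "invertible (A ** ?C)" by (rule invertible_mult[OF A Cinv])
    show ?thesis unfolding split_form_def
      by (rule exI[of _ "A ** ?C"], rule conjI[OF inv], rule exI[of _ ?a], rule exI[of _ "b / (of_nat d * \<epsilon>)"]) (rule allI, rule eqv)
  qed
  have \<phi>0: "\<phi> 0 = f"
  proof -
    have "(\<Sum>k\<in>{2..d}. (0::complex)^(k-1) * e k m) = 0" for m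
      by (rule sum.neutral) auto
    thus ?thesis by (simp add: \<phi>_def fun_eq_iff)
  qed
  have cont: "continuous_on UNIV \<phi>"
    unfolding \<phi>_def by (intro continuous_on_coordinatewise_then_product continuous_intros)
  define \<epsilon> where "\<epsilon> = (\<lambda>n. complex_of_real (inverse (real (Suc n))))"
  have \<epsilon>0: "\<epsilon> \<longlonglongrightarrow> 0"
    unfolding \<epsilon>_def using tendsto_of_real[OF LIMSEQ_inverse_real_of_nat] by (simp only: of_real_0)
  have \<epsilon>nz: "\<epsilon> n \<noteq> 0" for n unfolding \<epsilon>_def of_real_eq_0_iff by simp
  have "(\<lambda>n. \<phi> (\<epsilon> n)) \<longlonglongrightarrow> \<phi> 0"
    by (rule continuous_on_tendsto_compose[OF cont \<epsilon>0]) auto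
  moreover have "\<phi> (\<epsilon> n) \<in> {g. is_form d g \<and> split_form d g}" for n
    using \<phi>form \<phi>split[OF \<epsilon>nz] by simp
  ultimately show ?thesis unfolding closure_sequential \<phi>0 by (intro exI[of _ "\<lambda>n. \<phi> (\<epsilon> n)"] conjI allI)
qed



lemma tendsto_smult_vec:
  fixes x :: "'b \<Rightarrow> complex^3"
  assumes "(x \<longlongrightarrow> y) F"
  shows "((\<lambda>n. s *s x n) \<longlongrightarrow> s *s y) F"
  by (rule vec_tendstoI) (simp add: tendsto_mult_left[OF tendsto_vec_nth[OF assms]])

lemma tendsto_lin:
  assumes "(x \<longlongrightarrow> y) F" "(l \<longlongrightarrow> L) F"
  shows "((\<lambda>n. lin (l n) (x n)) \<longlongrightarrow> lin L y) F"
  unfolding lin_def using assms by (intro tendsto_intros)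

lemma eval_tendsto:
  fixes g :: "nat \<Rightarrow> (nat \<times> nat \<times> nat \<Rightarrow> complex)"
  assumes "g \<longlonglongrightarrow> f" "x \<longlonglongrightarrow> y"
  shows "(\<lambda>n. form_eval d (g n) (x n)) \<longlonglongrightarrow> form_eval d f y"
proof -
  have gm: "(\<lambda>n. g n m) \<longlonglongrightarrow> f m" for m
    by (rule continuous_on_tendsto_compose[OF continuous_on_product_coordinates assms(1)]) auto
  show ?thesis unfolding form_eval_def using gm assms(2) by (intro tendsto_intros)
qed

definition Qf :: "nat \<Rightarrow> complex \<Rightarrow> complex \<Rightarrow> complex \<Rightarrow> complex" where
  "Qf d a s t = (\<Sum>k\<in>{1..d}. of_nat (d choose k) * a^(d-k) * s^k * t^(k-1))"

lemma Q_identity: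
  assumes "1 \<le> d"
  shows "(a + s * t)^d - a^d = t * Qf d a s t"
proof -
  have "(s * t + a)^d = (\<Sum>k\<le>d. of_nat (d choose k) * (s*t)^k * a^(d-k))" by (rule binomial_ring)
  also have "{..d} = insert 0 {1..d}" by auto
  also have "(\<Sum>k\<in>insert 0 {1..d}. of_nat (d choose k) * (s*t)^k * a^(d-k)) = a^d + (\<Sum>k\<in>{1..d}. of_nat (d choose k) * (s*t)^k * a^(d-k))"
    by (subst sum.insert) auto
  also have "(\<Sum>k\<in>{1..d}. of_nat (d choose k) * (s*t)^k * a^(d-k)) = t * Qf d a s t"
    unfolding Qf_def sum_distrib_left
  proof (rule sum.cong[OF refl])
    fix k assume "k \<in> {1..d}"
    hence "t^k = t * t^(k-1)" by (cases k) auto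
    thus "of_nat (d choose k) * (s*t)^k * a^(d-k) = t * (of_nat (d choose k) * a^(d-k) * s^k * t^(k-1))"
      by (simp add: power_mult_distrib)
  qed
  finally show ?thesis by (simp add: add.commute)
qed

lemma Q_zero:
  assumes "1 \<le> d"
  shows "Qf d a s 0 = of_nat d * a^(d-1) * s"
proof -
  have "Qf d a s 0 = (\<Sum>k\<in>insert 1 {2..d}. of_nat (d choose k) * a^(d-k) * s^k * 0^(k-1))"
    unfolding Qf_def using assms by (intro sum.cong) auto
  also have "\<dots> = of_nat d * a^(d-1) * s + (\<Sum>k\<in>{2..d}. of_nat (d choose k) * a^(d-k) * s^k * 0^(k-1))"
    by (subst sum.insert) auto
  also have "(\<Sum>k\<in>{2..d}. of_nat (d choose k) * a^(d-k) * s^k * (0::complex)^(k-1)) = 0"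
    by (rule sum.neutral) auto
  finally show ?thesis by simp
qed

lemma Q_tendsto:
  assumes "(a \<longlongrightarrow> a0) F" "(t \<longlongrightarrow> t0) F"
  shows "((\<lambda>n. Qf d (a n) s (t n)) \<longlongrightarrow> Qf d a0 s t0) F"
  unfolding Qf_def using assms by (intro tendsto_intros)

lemma not_at_infinity_subseq:
  fixes x :: "nat \<Rightarrow> complex"
  assumes "\<not> filterlim x at_infinity sequentially"
  shows "\<exists>r c. strict_mono r \<and> (x \<circ> r) \<longlonglongrightarrow> c"
proof -
  obtain R where R: "\<not> eventually (\<lambda>n. R \<le> norm (x n)) sequentially"
    using assms unfolding filterlim_at_infinity[OF order_refl] by blast
  define S where "S = {n. norm (x n) < R}"
  have "infinite S" unfolding infinite_nat_iff_unbounded_le S_def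
  proof
    fix m
    from R have "\<not> (\<forall>n\<ge>m. R \<le> norm (x n))" unfolding eventually_sequentially by blast
    then show "\<exists>n\<ge>m. n \<in> {n. norm (x n) < R}" by (auto simp: not_le)
  qed
  define e where "e = enumerate S"
  have e: "strict_mono e" "\<And>n. e n \<in> S"
    using \<open>infinite S\<close> by (auto simp: e_def strict_mono_enumerate enumerate_in_set)
  have "bounded (range (x \<circ> e))"
    by (rule boundedI[of _ R]) (use e(2) in \<open>auto simp: S_def less_imp_le\<close>)
  then obtain c r2 where "strict_mono r2" "((x \<circ> e) \<circ> r2) \<longlonglongrightarrow> c"
    using bounded_imp_convergent_subsequence by blast
  thus ?thesis using strict_mono_o[OF e(1) \<open>strict_mono r2\<close>] by (metis comp_assoc)
qed

lemma exists_lin_one: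
  assumes "L \<noteq> 0"
  shows "\<exists>w. lin L w = 1"
proof -
  consider "L$1 \<noteq> 0" | "L$2 \<noteq> 0" | "L$3 \<noteq> 0" using assms by (auto simp: vec3_eq)
  then show ?thesis
  proof cases
    case 1 then show ?thesis by (intro exI[of _ "vector [1 / L$1, 0, 0]"]) (simp add: lin3)
  next
    case 2 then show ?thesis by (intro exI[of _ "vector [0, 1 / L$2, 0]"]) (simp add: lin3)
  next
    case 3 then show ?thesis by (intro exI[of _ "vector [0, 0, 1 / L$3]"]) (simp add: lin3)
  qed
qed



lemma core2:
  fixes Gs :: "nat \<Rightarrow> complex^3 \<Rightarrow> complex" and F :: "complex^3 \<Rightarrow> complex"
    and u l :: "nat \<Rightarrow> complex^3" and \<beta> :: "nat \<Rightarrow> complex"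
  assumes J: "\<And>r x y. strict_mono r \<Longrightarrow> x \<longlonglongrightarrow> y \<Longrightarrow> (\<lambda>n. Gs (r n) (x n)) \<longlonglongrightarrow> F y"
    and I: "\<And>n w s. Gs n (w + s *s u n) - \<beta> n * lin (l n) (w + s *s u n) ^ d = Gs n w - \<beta> n * lin (l n) w ^ d"
    and u: "u \<longlonglongrightarrow> U" and l: "l \<longlonglongrightarrow> L" and L0: "L \<noteq> 0" and d: "1 \<le> d"
  shows "(\<exists>\<beta>0. \<forall>w s. F (w + s *s U) - \<beta>0 * lin L (w + s *s U) ^ d = F w - \<beta>0 * lin L w ^ d)
     \<or> (lin L U = 0 \<and> (\<exists>\<mu>. \<forall>w s. F (w + s *s U) = F w + s * \<mu> * lin L w ^ (d-1)))"
proof -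
  have Jid: "x \<longlonglongrightarrow> y \<Longrightarrow> (\<lambda>n. Gs n (x n)) \<longlonglongrightarrow> F y" for x y
    using J[of "\<lambda>n. n" x y] by (simp add: strict_mono_def)
  have KF: "Gs n (w + s *s u n) - Gs n w = (\<beta> n * lin (l n) (u n)) * Qf d (lin (l n) w) s (lin (l n) (u n))" for n w s
  proof -
    have "Gs n (w + s *s u n) - Gs n w = \<beta> n * ((lin (l n) w + s * lin (l n) (u n)) ^ d - lin (l n) w ^ d)"
      using I[of n w s] by (simp add: lin_add lin_smult algebra_simps)
    also have "\<dots> = (\<beta> n * lin (l n) (u n)) * Qf d (lin (l n) w) s (lin (l n) (u n))"
      by (simp add: Q_identity[OF d])
    finally show ?thesis .
  qed
  have lam: "(\<lambda>n. lin (l n) (u n)) \<longlonglongrightarrow> lin L U" by (rule tendsto_lin[OF u l])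
  show ?thesis
  proof (cases "filterlim \<beta> at_infinity sequentially")
    case False
    then obtain r \<beta>0 where r: "strict_mono r" "(\<beta> \<circ> r) \<longlonglongrightarrow> \<beta>0"
      using not_at_infinity_subseq by blast
    have "F (w + s *s U) - \<beta>0 * lin L (w + s *s U) ^ d = F w - \<beta>0 * lin L w ^ d" for w s
    proof -
      have ur: "(\<lambda>n. u (r n)) \<longlonglongrightarrow> U" using LIMSEQ_subseq_LIMSEQ[OF u r(1)] by (simp add: o_def)
      have lr: "(\<lambda>n. l (r n)) \<longlonglongrightarrow> L" using LIMSEQ_subseq_LIMSEQ[OF l r(1)] by (simp add: o_def)
      have br: "(\<lambda>n. \<beta> (r n)) \<longlonglongrightarrow> \<beta>0" using r(2) by (simp add: o_def)
      have xr: "(\<lambda>n. w + s *s u (r n)) \<longlonglongrightarrow> w + s *s U"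
        by (intro tendsto_add tendsto_const tendsto_smult_vec ur)
      have L1: "(\<lambda>n. Gs (r n) (w + s *s u (r n)) - \<beta> (r n) * lin (l (r n)) (w + s *s u (r n)) ^ d)
          \<longlonglongrightarrow> F (w + s *s U) - \<beta>0 * lin L (w + s *s U) ^ d"
        by (intro tendsto_diff tendsto_mult tendsto_power J[OF r(1) xr] br tendsto_lin[OF xr lr])
      have L2: "(\<lambda>n. Gs (r n) w - \<beta> (r n) * lin (l (r n)) w ^ d) \<longlonglongrightarrow> F w - \<beta>0 * lin L w ^ d"
        by (intro tendsto_diff tendsto_mult tendsto_power J[OF r(1) tendsto_const] br tendsto_lin[OF tendsto_const lr])
      have eq: "(\<lambda>n. Gs (r n) (w + s *s u (r n)) - \<beta> (r n) * lin (l (r n)) (w + s *s u (r n)) ^ d) = (\<lambda>n. Gs (r n) w - \<beta> (r n) * lin (l (r n)) w ^ d)"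
        by (rule ext) (rule I)
      show ?thesis by (rule LIMSEQ_unique[OF L1[unfolded eq] L2])
    qed
    thus ?thesis by blast
  next
    case True
    have evnz: "eventually (\<lambda>n. \<beta> n \<noteq> 0) sequentially"
    proof -
      have "eventually (\<lambda>n. 1 \<le> norm (\<beta> n)) sequentially"
        using True unfolding filterlim_at_infinity[OF order_refl] by simp
      thus ?thesis by eventually_elim auto
    qed
    have lam0: "lin L U = 0"
    proof -
      have e1: "\<beta> n * lin (l n) (u n) ^ d = Gs n (u n) - Gs n 0" for n
      proof -
        have "Gs n (u n) - \<beta> n * lin (l n) (u n) ^ d = Gs n 0" using I[of n 0 1] d by (simp add: lin3 zero_power)
        thus ?thesis by (simp add: field_simps)
      qed
      have "(\<lambda>n. Gs n (u n) - Gs n 0) \<longlonglongrightarrow> F U - F 0"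
        by (intro tendsto_diff Jid u tendsto_const)
      hence "(\<lambda>n. (Gs n (u n) - Gs n 0) / \<beta> n) \<longlonglongrightarrow> 0"
        using True by (rule tendsto_divide_0)
      moreover have "eventually (\<lambda>n. (Gs n (u n) - Gs n 0) / \<beta> n = lin (l n) (u n) ^ d) sequentially"
        using evnz by eventually_elim (simp add: e1[symmetric])
      ultimately have "(\<lambda>n. lin (l n) (u n) ^ d) \<longlonglongrightarrow> 0"
        by (rule Lim_transform_eventually)
      moreover have "(\<lambda>n. lin (l n) (u n) ^ d) \<longlonglongrightarrow> lin L U ^ d"
        by (intro tendsto_power lam)
      ultimately have "0 = lin L U ^ d" by (rule LIMSEQ_unique)
      thus ?thesis by simp
    qed
    define \<sigma> where "\<sigma> = (\<lambda>n. \<beta> n * lin (l n) (u n))"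
    show ?thesis
    proof (cases "filterlim \<sigma> at_infinity sequentially")
      case False
      then obtain r \<mu> where r: "strict_mono r" "(\<sigma> \<circ> r) \<longlonglongrightarrow> \<mu>"
        using not_at_infinity_subseq by blast
      have "F (w + s *s U) = F w + s * (\<mu> * of_nat d) * lin L w ^ (d-1)" for w s
      proof -
        have ur: "(\<lambda>n. u (r n)) \<longlonglongrightarrow> U" using LIMSEQ_subseq_LIMSEQ[OF u r(1)] by (simp add: o_def)
        have lr: "(\<lambda>n. l (r n)) \<longlonglongrightarrow> L" using LIMSEQ_subseq_LIMSEQ[OF l r(1)] by (simp add: o_def)
        have sr: "(\<lambda>n. \<sigma> (r n)) \<longlonglongrightarrow> \<mu>" using r(2) by (simp add: o_def)
        have xr: "(\<lambda>n. w + s *s u (r n)) \<longlonglongrightarrow> w + s *s U"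
          by (intro tendsto_add tendsto_const tendsto_smult_vec ur)
        have L1: "(\<lambda>n. Gs (r n) (w + s *s u (r n)) - Gs (r n) w) \<longlonglongrightarrow> F (w + s *s U) - F w"
          by (intro tendsto_diff J[OF r(1) xr] J[OF r(1) tendsto_const])
        have L2: "(\<lambda>n. \<sigma> (r n) * Qf d (lin (l (r n)) w) s (lin (l (r n)) (u (r n)))) \<longlonglongrightarrow> \<mu> * Qf d (lin L w) s (lin L U)"
          by (intro tendsto_mult sr Q_tendsto tendsto_lin[OF tendsto_const lr] tendsto_lin[OF ur lr])
        have eq2: "(\<lambda>n. Gs (r n) (w + s *s u (r n)) - Gs (r n) w) = (\<lambda>n. \<sigma> (r n) * Qf d (lin (l (r n)) w) s (lin (l (r n)) (u (r n))))"
          by (rule ext) (simp only: KF \<sigma>_def)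
        have "F (w + s *s U) - F w = \<mu> * Qf d (lin L w) s (lin L U)"
          by (rule LIMSEQ_unique[OF L1[unfolded eq2] L2])
        also have "\<dots> = s * (\<mu> * of_nat d) * lin L w ^ (d-1)"
          by (simp add: lam0 Q_zero[OF d])
        finally show ?thesis by (simp add: algebra_simps)
      qed
      thus ?thesis using lam0 by blast
    next
      case True
      obtain w0 where w0: "lin L w0 = 1" using exists_lin_one[OF L0] by blast
      have evs: "eventually (\<lambda>n. \<sigma> n \<noteq> 0) sequentially"
      proof -
        have "eventually (\<lambda>n. 1 \<le> norm (\<sigma> n)) sequentially"
          using True unfolding filterlim_at_infinity[OF order_refl] by simp
        thus ?thesis by eventually_elim auto
      qed
      have "(\<lambda>n. Gs n (w0 + 1 *s u n) - Gs n w0) \<longlonglongrightarrow> F (w0 + 1 *s U) - F w0"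
        by (intro tendsto_diff Jid tendsto_add tendsto_const tendsto_smult_vec u)
      hence "(\<lambda>n. (Gs n (w0 + 1 *s u n) - Gs n w0) / \<sigma> n) \<longlonglongrightarrow> 0"
        using True by (rule tendsto_divide_0)
      moreover have "eventually (\<lambda>n. (Gs n (w0 + 1 *s u n) - Gs n w0) / \<sigma> n = Qf d (lin (l n) w0) 1 (lin (l n) (u n))) sequentially"
      proof -
        have KF1: "Gs n (w0 + 1 *s u n) - Gs n w0 = \<sigma> n * Qf d (lin (l n) w0) 1 (lin (l n) (u n))" for n
          by (simp only: KF \<sigma>_def)
        show ?thesis using evs by eventually_elim (simp only: KF1, simp)
      qed
      ultimately have "(\<lambda>n. Qf d (lin (l n) w0) 1 (lin (l n) (u n))) \<longlonglongrightarrow> 0"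
        by (rule Lim_transform_eventually)
      moreover have "(\<lambda>n. Qf d (lin (l n) w0) 1 (lin (l n) (u n))) \<longlonglongrightarrow> Qf d (lin L w0) 1 (lin L U)"
        by (intro Q_tendsto tendsto_lin[OF tendsto_const l] lam)
      ultimately have "0 = Qf d (lin L w0) 1 (lin L U)" by (rule LIMSEQ_unique)
      hence "of_nat d = (0::complex)" by (simp add: lam0 w0 Q_zero[OF d])
      hence False using d by simp
      thus ?thesis ..
    qed
  qed
qed



lemma smult_scaleR_vec: "s *s (r *\<^sub>R x) = (s * of_real r) *s (x::complex^3)"
  unfolding vec3_eq vector_smult_component vector_scaleR_component by (simp add: scaleR_conv_of_real)

lemma lin_scaleR: "lin (r *\<^sub>R l) x = of_real r * lin l x"
  unfolding lin3 vector_scaleR_component by (simp add: scaleR_conv_of_real algebra_simps)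

lemma lin_zero_left: "lin 0 x = 0" by (simp add: lin3)
lemma lin_zero_right: "lin l 0 = 0" by (simp add: lin3)

lemma forward:
  assumes "is_form d f" "f \<in> closure {g. is_form d g \<and> split_form d g}"
  shows "split_form d f \<or> degen_form d f"
proof (cases "d = 0")
  case True
  then show ?thesis using split_d0 by simp
next
  case False
  hence d: "1 \<le> d" by simp
  obtain g where gS: "\<And>n. g n \<in> {g. is_form d g \<and> split_form d g}" and gl: "g \<longlonglongrightarrow> f"
    using assms(2) unfolding closure_sequential by blast
  have "\<forall>n. \<exists>A. invertible A \<and> (\<exists>a b. \<forall>v. form_eval d (g n) (A *v v) = binform d a v + b * (v$3)^d)"
    using gS unfolding split_form_def by blast
  from choice[OF this] obtain A where A: "\<And>n. invertible (A n)"
    and ex1: "\<forall>n. \<exists>a b. \<forall>v. form_eval d (g n) (A n *v v) = binform d a v + b * (v$3)^d" by blast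
  from choice[OF ex1] obtain a where "\<forall>n. \<exists>b. \<forall>v. form_eval d (g n) (A n *v v) = binform d (a n) v + b * (v$3)^d" by blast
  from choice[OF this] obtain b where Aeq: "\<And>n v. form_eval d (g n) (A n *v v) = binform d (a n) v + b n * (v$3)^d" by blast
  have "\<forall>n. \<exists>B. A n ** B = mat 1 \<and> B ** A n = mat 1" using A unfolding invertible_def by blast
  from choice[OF this] obtain B where AB: "\<And>n. A n ** B n = mat 1" and BA: "\<And>n. B n ** A n = mat 1" by blast
  define G where "G = (\<lambda>n. form_eval d (g n))"
  define P where "P = (\<lambda>n. A n *v e3)"
  define Lr where "Lr = (\<lambda>n. B n $ 3)"
  have BAv: "B n *v (A n *v y) = y" for n y by (simp add: matrix_vector_mul_assoc BA)
  have ABv: "A n *v (B n *v y) = y" for n y by (simp add: matrix_vector_mul_assoc AB)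
  have Gform: "G n w - b n * lin (Lr n) w ^ d = binform d (a n) (B n *v w)" for n w
  proof -
    have "G n w = binform d (a n) (B n *v w) + b n * ((B n *v w)$3)^d"
      unfolding G_def using Aeq[of n "B n *v w"] by (simp add: ABv)
    thus ?thesis by (simp add: Lr_def lin_matrix)
  qed
  have inv0: "G n (w + t *s P n) - b n * lin (Lr n) (w + t *s P n) ^ d = G n w - b n * lin (Lr n) w ^ d" for n w t
  proof -
    have "B n *v (w + t *s P n) = B n *v w + t *s e3" by (simp add: mv_add_smult P_def BAv)
    hence "binform d (a n) (B n *v (w + t *s P n)) = binform d (a n) (B n *v w)"
      by (simp add: binform_def)
    thus ?thesis by (simp only: Gform)
  qed
  have LP: "lin (Lr n) (P n) = 1" for n
    unfolding Lr_def P_def lin_matrix[symmetric] BAv by simp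
  have Pnz: "P n \<noteq> 0" for n using LP[of n] by (auto simp: lin_zero_right)
  have Lnz: "Lr n \<noteq> 0" for n using LP[of n] by (auto simp: lin_zero_left)
  define u where "u = (\<lambda>n. (1 / norm (P n)) *\<^sub>R P n)"
  define l where "l = (\<lambda>n. (1 / norm (Lr n)) *\<^sub>R Lr n)"
  define \<beta> where "\<beta> = (\<lambda>n. b n * of_real (norm (Lr n)) ^ d)"
  have un: "norm (u n) = 1" for n using Pnz by (simp add: u_def)
  have ln: "norm (l n) = 1" for n using Lnz by (simp add: l_def)
  have blin: "\<beta> n * lin (l n) x ^ d = b n * lin (Lr n) x ^ d" for n x
  proof -
    have "norm (Lr n) \<noteq> 0" using Lnz by simp
    hence "(of_real (norm (Lr n)) :: complex) \<noteq> 0" by simp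
    thus ?thesis unfolding \<beta>_def l_def lin_scaleR by (simp add: power_mult_distrib field_simps)
  qed
  have I: "G n (w + s *s u n) - \<beta> n * lin (l n) (w + s *s u n) ^ d = G n w - \<beta> n * lin (l n) w ^ d" for n w s
    unfolding blin u_def smult_scaleR_vec by (rule inv0)
  have "compact (sphere (0::complex^3) 1 \<times> sphere (0::complex^3) 1)"
    by (intro compact_Times compact_sphere)
  hence "seq_compact (sphere (0::complex^3) 1 \<times> sphere (0::complex^3) 1)"
    by (rule compact_imp_seq_compact)
  moreover have "\<forall>n. (u n, l n) \<in> sphere 0 1 \<times> sphere 0 1" using un ln by simp
  ultimately obtain UL r1 where UL: "UL \<in> sphere 0 1 \<times> sphere 0 1" and r1: "strict_mono r1"
    and conv: "((\<lambda>n. (u n, l n)) \<circ> r1) \<longlonglongrightarrow> UL"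
    by (rule seq_compactE)
  define U where "U = fst UL"
  define L where "L = snd UL"
  have uc: "(\<lambda>n. u (r1 n)) \<longlonglongrightarrow> U" using tendsto_fst[OF conv] by (simp add: U_def o_def)
  have lc: "(\<lambda>n. l (r1 n)) \<longlonglongrightarrow> L" using tendsto_snd[OF conv] by (simp add: L_def o_def)
  have U0: "U \<noteq> 0" and L0: "L \<noteq> 0" using UL by (auto simp: U_def L_def)
  have J: "(\<lambda>n. G (r1 (r n)) (x n)) \<longlonglongrightarrow> form_eval d f y" if "strict_mono r" "x \<longlonglongrightarrow> y" for r x y
  proof -
    have "(g \<circ> (r1 \<circ> r)) \<longlonglongrightarrow> f" by (rule LIMSEQ_subseq_LIMSEQ[OF gl strict_mono_o[OF r1 that(1)]])
    hence "(\<lambda>n. g (r1 (r n))) \<longlonglongrightarrow> f" by (simp add: o_def)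
    thus ?thesis unfolding G_def by (rule eval_tendsto[OF _ that(2)])
  qed
  have C: "(\<exists>\<beta>0. \<forall>w s. form_eval d f (w + s *s U) - \<beta>0 * lin L (w + s *s U) ^ d = form_eval d f w - \<beta>0 * lin L w ^ d)
     \<or> (lin L U = 0 \<and> (\<exists>\<mu>. \<forall>w s. form_eval d f (w + s *s U) = form_eval d f w + s * \<mu> * lin L w ^ (d-1)))"
    by (rule core2[of "\<lambda>n. G (r1 n)" "form_eval d f" "\<lambda>n. u (r1 n)" "\<lambda>n. \<beta> (r1 n)" "\<lambda>n. l (r1 n)" d U L,
        OF J I uc lc L0 d])
  have hF: "hf d (form_eval d f)" by (auto simp: hf_def)
  show ?thesis
    using C
  proof
    assume "\<exists>\<beta>0. \<forall>w s. form_eval d f (w + s *s U) - \<beta>0 * lin L (w + s *s U) ^ d = form_eval d f w - \<beta>0 * lin L w ^ d"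
    then obtain \<beta>0 where h: "\<And>w s. form_eval d f (w + s *s U) - \<beta>0 * lin L (w + s *s U) ^ d = form_eval d f w - \<beta>0 * lin L w ^ d"
      by blast
    define \<alpha> where "\<alpha> = (\<lambda>w. form_eval d f w - \<beta>0 * lin L w ^ d)"
    have ha: "hf d \<alpha>" unfolding \<alpha>_def by (intro hf_diff hF hf_smult hf_lin_pow)
    have ia: "\<alpha> (w + s *s U) = \<alpha> w" for w s unfolding \<alpha>_def by (rule h)
    obtain A' a' b' where "invertible A'" "\<And>v. \<alpha> (A' *v v) + \<beta>0 * lin L (A' *v v) ^ d = binform d a' v + b' * (v$3)^d"
      using split_general[OF ha U0 ia, of \<beta>0 L] by blast
    hence "invertible A' \<and> (\<forall>v. form_eval d f (A' *v v) = binform d a' v + b' * (v$3)^d)"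
      unfolding \<alpha>_def by simp
    hence "split_form d f" unfolding split_form_def by blast
    thus ?thesis ..
  next
    assume "lin L U = 0 \<and> (\<exists>\<mu>. \<forall>w s. form_eval d f (w + s *s U) = form_eval d f w + s * \<mu> * lin L w ^ (d-1))"
    then obtain \<mu> where h0: "lin L U = 0" and h: "\<And>w s. form_eval d f (w + s *s U) = form_eval d f w + s * \<mu> * lin L w ^ (d-1)"
      by blast
    obtain A' a' b' where "invertible A'" "\<And>v. form_eval d f (A' *v v) = binform d a' v + b' * (v$1)^(d-1) * v$3"
      using degen_general[OF hF U0 h0 h] by blast
    hence "degen_form d f" unfolding degen_form_def using False by blast
    thus ?thesis ..
  qed
qed

theorem lemma7p1:
  fixes d :: nat and f :: "nat \<times> nat \<times> nat \<Rightarrow> complex"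
  assumes "is_form d f"
  shows "f \<in> closure {g. is_form d g \<and> split_form d g} \<longleftrightarrow> split_form d f \<or> degen_form d f"
proof
  assume "f \<in> closure {g. is_form d g \<and> split_form d g}"
  thus "split_form d f \<or> degen_form d f" by (rule forward[OF assms])
next
  assume "split_form d f \<or> degen_form d f"
  thus "f \<in> closure {g. is_form d g \<and> split_form d g}"
  proof
    assume "split_form d f"
    hence "f \<in> {g. is_form d g \<and> split_form d g}" using assms by blast
    thus ?thesis by (rule subsetD[OF closure_subset])
  next
    assume "degen_form d f"
    thus ?thesis by (rule degen_in_closure[OF assms])
  qed
qed


end
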